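(* Let $n\in\mathbb{N}$ and let $\mathbf{s}=(s_0,\ldots,s_n)\subset[0,\infty)$ be positive on $(0,\infty)$. The following are equivalent: (i) $\mathbf{s}$ is strictly positive on $(0,\infty)$; (ii) $\mathrm{ind}_\infty(\mathbf{s})=\left\lceil\frac{n+1}{2}\right\rceil$; (iii) $\mathbf{s}$ is indeterminate on $(0,\infty)$.
   Context: For $a<b$ and $\mathbf{s}=(s_0,\ldots,s_n)$ let $\sigma:\mathbb{R}_n[x]\to\mathbb{R}$ be linear with $\sigma(x^k)=s_k$. $\mathbf{s}$ is positive on $[a,b]$ if $\sigma(P)\ge0$ for every real polynomial $P$ of degree $\le n$ nonnegative on $[a,b]$, and strictly positive on $[a,b]$ if moreover $\sigma(P)>0$ for every such $P$ not identically zero. $\mathbf{s}\subset[0,\infty)$ is positive (resp. strictly positive) on $(0,\infty)$ if it is positive (resp. strictly positive) on some interval $[a,b]\subset(0,\infty)$. $\mathcal{M}_\infty(\mathbf{s})$ denotes the set of positive Borel measures $\mu$ on $(0,\infty)$ with $\mathrm{supp}\,\mu$ contained in some compact $[a,b]\subset(0,\infty)$ and $\int t^kd\mu=s_k$ for $k=0,\ldots,n$; $\mathbf{s}$ is determinate on $(0,\infty)$ if $\mathcal{M}_\infty(\mathbf{s})$ has exactly one element, indeterminate if it has more than one. $\mathrm{ind}_\infty(\mathbf{s})=\min\{\#\mathrm{supp}\,\mu:\mu\in\mathcal{M}_\infty(\mathbf{s})\}$. *)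

theory Defs
  imports "HOL-Analysis.Analysis" "HOL-Computational_Algebra.Polynomial" "HOL-Library.Extended_Nat"
begin

definition riesz :: "(nat \<Rightarrow> real) \<Rightarrow> real poly \<Rightarrow> real" where
  "riesz s P = (\<Sum>k\<le>degree P. coeff P k * s k)"

definition positive_on :: "nat \<Rightarrow> (nat \<Rightarrow> real) \<Rightarrow> real \<Rightarrow> real \<Rightarrow> bool" where
  "positive_on n s a b \<longleftrightarrow>
     (\<forall>P::real poly. degree P \<le> n \<and> (\<forall>x\<in>{a..b}. poly P x \<ge> 0) \<longrightarrow> riesz s P \<ge> 0)"

definition strictly_positive_on :: "nat \<Rightarrow> (nat \<Rightarrow> real) \<Rightarrow> real \<Rightarrow> real \<Rightarrow> bool" where
  "strictly_positive_on n s a b \<longleftrightarrow> positive_on n s a b \<and>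
     (\<forall>P::real poly. degree P \<le> n \<and> (\<forall>x\<in>{a..b}. poly P x \<ge> 0) \<and> P \<noteq> 0 \<longrightarrow> riesz s P > 0)"

definition positive_pos :: "nat \<Rightarrow> (nat \<Rightarrow> real) \<Rightarrow> bool" where
  "positive_pos n s \<longleftrightarrow> (\<exists>a b. 0 < a \<and> a < b \<and> positive_on n s a b)"

definition strictly_positive_pos :: "nat \<Rightarrow> (nat \<Rightarrow> real) \<Rightarrow> bool" where
  "strictly_positive_pos n s \<longleftrightarrow> (\<exists>a b. 0 < a \<and> a < b \<and> strictly_positive_on n s a b)"

definition msupp :: "real measure \<Rightarrow> real set" where
  "msupp \<mu> = {x. \<forall>e>0. emeasure \<mu> (ball x e) > 0}"

definition reps_pos :: "nat \<Rightarrow> (nat \<Rightarrow> real) \<Rightarrow> real measure set" where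
  "reps_pos n s = {\<mu>. sets \<mu> = sets borel \<and>
      (\<exists>a b. 0 < a \<and> a \<le> b \<and> msupp \<mu> \<subseteq> {a..b}) \<and>
      (\<forall>k\<le>n. integrable \<mu> (\<lambda>t. t ^ k) \<and> (\<integral>t. t ^ k \<partial>\<mu>) = s k)}"

definition determinate_pos :: "nat \<Rightarrow> (nat \<Rightarrow> real) \<Rightarrow> bool" where
  "determinate_pos n s \<longleftrightarrow> (\<exists>!\<mu>. \<mu> \<in> reps_pos n s)"

definition indeterminate_pos :: "nat \<Rightarrow> (nat \<Rightarrow> real) \<Rightarrow> bool" where
  "indeterminate_pos n s \<longleftrightarrow> (\<exists>\<mu> \<nu>. \<mu> \<in> reps_pos n s \<and> \<nu> \<in> reps_pos n s \<and> \<mu> \<noteq> \<nu>)"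

definition ind_pos :: "nat \<Rightarrow> (nat \<Rightarrow> real) \<Rightarrow> enat" where
  "ind_pos n s = (INF \<mu>\<in>reps_pos n s. if finite (msupp \<mu>) then enat (card (msupp \<mu>)) else \<infinity>)"

end

theory Submission
  imports Defs
begin

lemma riesz_altdef:
  assumes "degree P \<le> N"
  shows "riesz s P = (\<Sum>k\<le>N. coeff P k * s k)"
proof -
  have "(\<Sum>k\<le>N. coeff P k * s k) = (\<Sum>k\<le>degree P. coeff P k * s k)"
    by (rule sum.mono_neutral_right) (use assms in \<open>auto intro!: coeff_eq_0\<close>)
  then show ?thesis by (simp add: riesz_def)
qed

lemma riesz_add: "riesz s (p + q) = riesz s p + riesz s q"
proof -
  define N where "N = max (degree p) (degree q)"
  have "degree (p + q) \<le> N" unfolding N_def by (rule degree_add_le) auto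
  then have "riesz s (p + q) = (\<Sum>k\<le>N. coeff (p+q) k * s k)" by (rule riesz_altdef)
  also have "\<dots> = (\<Sum>k\<le>N. coeff p k * s k) + (\<Sum>k\<le>N. coeff q k * s k)"
    by (simp add: distrib_right sum.distrib)
  also have "\<dots> = riesz s p + riesz s q"
    by (subst (1 2) riesz_altdef[symmetric]) (auto simp: N_def)
  finally show ?thesis .
qed

lemma riesz_smult: "riesz s (smult c p) = c * riesz s p"
proof -
  have "riesz s (smult c p) = (\<Sum>k\<le>degree p. coeff (smult c p) k * s k)"
    by (rule riesz_altdef) simp
  then show ?thesis by (simp add: riesz_def sum_distrib_left mult.assoc)
qed

lemma riesz_0[simp]: "riesz s 0 = 0" by (simp add: riesz_def)

lemma riesz_minus: "riesz s (- p) = - riesz s p"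
  using riesz_smult[of s "-1" p] by simp

lemma riesz_diff: "riesz s (p - q) = riesz s p - riesz s q"
  using riesz_add[of s p "-q"] riesz_minus[of s q] by simp

lemma riesz_sum: "riesz s (\<Sum>i\<in>A. f i) = (\<Sum>i\<in>A. riesz s (f i))"
  by (induction A rule: infinite_finite_induct) (auto simp: riesz_add)

lemma riesz_monom: "riesz s (monom 1 k) = s k"
proof -
  have "(\<Sum>ka\<le>k. (if k = ka then 1 else 0) * s ka) = (\<Sum>ka\<le>k. if ka = k then s ka else 0)"
    by (rule sum.cong) auto
  then show ?thesis by (simp add: riesz_def degree_monom_eq coeff_monom)
qed

lemma riesz_shift: "riesz (\<lambda>j. riesz s (r * monom 1 j)) g = riesz s (r * g)"
proof -
  have "r * g = r * (\<Sum>i\<le>degree g. monom (coeff g i) i)" by (simp add: poly_as_sum_of_monoms)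
  also have "\<dots> = (\<Sum>i\<le>degree g. smult (coeff g i) (r * monom 1 i))"
    by (simp add: sum_distrib_left smult_monom[symmetric] del: smult_monom)
       (metis mult_smult_right smult_monom mult.commute mult_1)
  finally have "riesz s (r * g) = (\<Sum>i\<le>degree g. coeff g i * riesz s (r * monom 1 i))"
    by (simp add: riesz_sum riesz_smult)
  then show ?thesis by (simp add: riesz_def mult.commute)
qed

definition omega :: "real set \<Rightarrow> real poly" where
  "omega Z = (\<Prod>z\<in>Z. [:-z, 1:])"

lemma poly_omega: "poly (omega Z) x = (\<Prod>z\<in>Z. x - z)"
  by (simp add: omega_def poly_prod)

lemma omega_nz: "omega Z \<noteq> 0"
  by (cases "finite Z") (auto simp: omega_def prod_zero_iff)

lemma degree_omega: "finite Z \<Longrightarrow> degree (omega Z) = card Z"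
  by (simp add: omega_def degree_prod_eq_sum_degree)

lemma lead_omega: "lead_coeff (omega Z) = 1"
  by (simp add: omega_def lead_coeff_prod)

lemma poly_omega_nz: "finite Z \<Longrightarrow> x \<notin> Z \<Longrightarrow> poly (omega Z) x \<noteq> 0"
  by (simp add: poly_omega)

lemma omega_insert: "finite Z \<Longrightarrow> z \<notin> Z \<Longrightarrow> omega (insert z Z) = [:-z,1:] * omega Z"
  by (simp add: omega_def)

lemma omega_dvd:
  assumes "finite Z" "\<forall>z\<in>Z. poly f z = 0"
  shows "omega Z dvd f"
  using assms
proof (induction Z arbitrary: f rule: finite_induct)
  case empty then show ?case by (simp add: omega_def)
next
  case (insert z Z)
  then obtain g where g: "f = omega Z * g" by (meson dvd_def insert_iff)
  have "poly f z = 0" using insert by auto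
  then have "poly g z = 0" using g poly_omega_nz[OF insert(1,2)] by simp
  then obtain h where "g = [:-z,1:] * h" using poly_eq_0_iff_dvd by (metis dvdE)
  then have "f = omega (insert z Z) * h" using g omega_insert[OF insert(1,2)] by (simp only: ac_simps)
  then show ?case by simp
qed

lemma omega_sq_dvd:
  assumes "finite Z" "\<forall>z\<in>Z. [:-z,1:]^2 dvd f"
  shows "(omega Z)^2 dvd f"
  using assms
proof (induction Z arbitrary: f rule: finite_induct)
  case empty then show ?case by (simp add: omega_def)
next
  case (insert z Z)
  show ?case
  proof (cases "f = 0")
    case True then show ?thesis by simp
  next
    case False
    then obtain g where g: "f = (omega Z)^2 * g" using insert by (meson dvd_def insert_iff)
    have nz: "(omega Z)^2 * g \<noteq> 0" using g False by simp
    have "order z ((omega Z)^2) = 0"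
      by (rule order_0I) (use poly_omega_nz[OF insert(1,2)] in simp)
    then have "order z g = order z f" using order_mult[OF nz] g by simp
    moreover have "2 \<le> order z f" using insert(4) False order_divides by auto
    ultimately have "[:-z,1:]^2 dvd g" unfolding order_divides by simp
    then obtain h where "g = [:-z,1:]^2 * h" by (metis dvdE)
    then have "f = (omega (insert z Z))^2 * h" using g omega_insert[OF insert(1,2)]
      by (simp only: power_mult_distrib ac_simps)
    then show ?thesis by simp
  qed
qed

definition lag :: "real set \<Rightarrow> real \<Rightarrow> real poly" where
  "lag Y y = smult (inverse (\<Prod>y'\<in>Y-{y}. y - y')) (omega (Y - {y}))"

lemma poly_lag:
  assumes "finite Y" "y \<in> Y" "y' \<in> Y"
  shows "poly (lag Y y) y' = (if y' = y then 1 else 0)"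
proof (cases "y' = y")
  case True
  have "(\<Prod>y'\<in>Y-{y}. y - y') \<noteq> 0" using assms by (simp add: prod_zero_iff)
  then show ?thesis using True by (simp add: lag_def poly_omega)
next
  case False
  then have "(\<Prod>z\<in>Y-{y}. y' - z) = 0" using assms by (simp add: prod_zero_iff)
  then show ?thesis using False by (simp add: lag_def poly_omega)
qed

lemma degree_lag:
  assumes "finite Y" "y \<in> Y"
  shows "degree (lag Y y) \<le> card Y - 1"
proof -
  have "degree (lag Y y) \<le> degree (omega (Y - {y}))" by (simp add: lag_def)
  also have "\<dots> = card (Y - {y})" using assms by (simp add: degree_omega)
  also have "\<dots> \<le> card Y - 1" using assms by (simp add: card_Diff_singleton_if)
  finally show ?thesis .
qed

lemma interp_repr:
  assumes Y: "finite Y" "card Y \<le> N + 1"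
    and van: "\<And>f. degree f \<le> N \<Longrightarrow> (\<forall>y\<in>Y. poly f y = 0) \<Longrightarrow> riesz s f = 0"
    and f: "degree f \<le> N"
  shows "riesz s f = (\<Sum>y\<in>Y. riesz s (lag Y y) * poly f y)"
proof -
  define g where "g = f - (\<Sum>y\<in>Y. smult (poly f y) (lag Y y))"
  have dl: "degree (smult (poly f y) (lag Y y)) \<le> N" if "y \<in> Y" for y
    using degree_lag[OF Y(1) that] Y(2) by (meson degree_smult_le le_diff_conv order_trans)
  have "degree g \<le> N" unfolding g_def
    by (rule degree_diff_le[OF f degree_sum_le[OF Y(1) dl]])
  moreover have "\<forall>y\<in>Y. poly g y = 0"
  proof
    fix y0 assume y0: "y0 \<in> Y"
    have "poly (\<Sum>y\<in>Y. smult (poly f y) (lag Y y)) y0 = (\<Sum>y\<in>Y. poly f y * (if y0 = y then 1 else 0))"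
      by (simp add: poly_sum poly_lag[OF Y(1) _ y0])
    also have "\<dots> = (\<Sum>y\<in>Y. if y0 = y then poly f y else 0)" by (rule sum.cong) auto
    also have "\<dots> = poly f y0" using y0 Y(1) by (simp add: sum.delta)
    finally show "poly g y0 = 0" by (simp add: g_def)
  qed
  ultimately have "riesz s g = 0" by (rule van)
  then show ?thesis
    by (simp add: g_def riesz_diff riesz_sum riesz_smult mult.commute)
qed

lemma sign_const:
  fixes F :: "real poly"
  assumes "F \<noteq> 0" "\<forall>z. a < z \<and> z < b \<longrightarrow> even (order z F)"
  shows "(\<forall>x\<in>{a..b}. poly F x \<ge> 0) \<or> (\<forall>x\<in>{a..b}. poly F x \<le> 0)"
  using assms
proof (induction "degree F" arbitrary: F rule: less_induct)
  case less
  show ?case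
  proof (cases "\<exists>z. a < z \<and> z < b \<and> poly F z = 0")
    case True
    then obtain z where z: "a < z" "z < b" "poly F z = 0" by blast
    then have "order z F \<noteq> 0" using less.prems order_root by blast
    moreover have "even (order z F)" using less.prems z by blast
    ultimately have "2 \<le> order z F" by presburger
    then have "[:-z,1:]^2 dvd F" using order_divides by blast
    then obtain G where G: "F = [:-z,1:]^2 * G" by (metis dvdE)
    have Gnz: "G \<noteq> 0" using G less.prems by auto
    have dG: "degree G < degree F" using G Gnz by (simp add: degree_mult_eq degree_power_eq)
    have "even (order w G)" if "a < w" "w < b" for w
    proof -
      have "order w F = order w ([:-z,1:]^2) + order w G"
        using G less.prems(1) order_mult by metis
      moreover have "order w ([:-z,1:]^2) = (if w = z then 2 else 0)"
        using order_power_n_n[of z 2] by (auto intro!: order_0I)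
      ultimately show ?thesis using less.prems(2) that by (auto split: if_splits)
    qed
    then have "(\<forall>x\<in>{a..b}. poly G x \<ge> 0) \<or> (\<forall>x\<in>{a..b}. poly G x \<le> 0)"
      using less.hyps[OF dG Gnz] by blast
    then show ?thesis
      by (auto simp: G intro: mult_nonneg_nonneg mult_nonneg_nonpos)
  next
    case False
    show ?thesis
    proof (rule ccontr)
      assume "\<not> ?thesis"
      then obtain x1 x2 where x: "x1 \<in> {a..b}" "x2 \<in> {a..b}" "poly F x1 < 0" "poly F x2 > 0"
        by (auto simp: not_le)
      have "x1 \<noteq> x2" using x by auto
      then have "\<exists>x. min x1 x2 < x \<and> x < max x1 x2 \<and> poly F x = 0"
        using poly_IVT_pos[of x1 x2 F] poly_IVT_neg[of x2 x1 F] x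
        by (cases "x1 < x2") auto
      then show False using False x by auto
    qed
  qed
qed

lemma nonneg_root_sq:
  fixes P :: "real poly"
  assumes "poly P z = 0" "e > 0" "\<And>x. \<bar>x - z\<bar> < e \<Longrightarrow> poly P x \<ge> 0"
  shows "[:-z,1:]^2 dvd P"
proof -
  obtain Q where Q: "P = [:-z,1:] * Q" using assms(1) poly_eq_0_iff_dvd by (metis dvdE)
  have "poly Q z = 0"
  proof (rule ccontr)
    assume nz: "poly Q z \<noteq> 0"
    have "isCont (poly Q) z" by (intro continuous_intros)
    then have "(poly Q) \<midarrow>z\<rightarrow> poly Q z" by (simp add: isCont_def)
    from LIM_D[OF this] nz obtain d where d: "d > 0"
      "\<And>x. x \<noteq> z \<and> norm (x - z) < d \<Longrightarrow> norm (poly Q x - poly Q z) < \<bar>poly Q z\<bar>"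
      by (metis zero_less_abs_iff)
    define t where "t = min d e / 2"
    have t: "t > 0" "t < d" "t < e" using d assms(2) by (auto simp: t_def)
    show False
    proof (cases "poly Q z > 0")
      case True
      have "norm (poly Q (z - t) - poly Q z) < \<bar>poly Q z\<bar>" using d(2)[of "z - t"] t by auto
      then have "poly Q (z - t) > 0" using True by auto
      moreover have "poly P (z - t) \<ge> 0" using assms(3)[of "z - t"] t by auto
      ultimately show False using t by (simp add: Q mult_le_0_iff)
    next
      case False
      then have neg: "poly Q z < 0" using nz by auto
      have "norm (poly Q (z + t) - poly Q z) < \<bar>poly Q z\<bar>" using d(2)[of "z + t"] t by auto
      then have "poly Q (z + t) < 0" using neg by auto
      moreover have "poly P (z + t) \<ge> 0" using assms(3)[of "z + t"] t by auto
      ultimately show False using t by (simp add: Q zero_le_mult_iff)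
    qed
  qed
  then obtain R where "Q = [:-z,1:] * R" using poly_eq_0_iff_dvd by (metis dvdE)
  then show ?thesis using Q by (metis dvd_triv_left mult.assoc power2_eq_square)
qed

lemma low_deg:
  fixes r :: "real poly"
  assumes "degree r \<le> Suc j" "coeff r (Suc j) = 0"
  shows "degree r \<le> j"
proof (rule ccontr)
  assume "\<not> degree r \<le> j"
  then have "degree r = Suc j" using assms(1) by simp
  then have "r = 0" using assms(2) leading_coeff_0_iff by metis
  then show False using \<open>degree r = Suc j\<close> by simp
qed

lemma orth_ext:
  fixes p :: "nat \<Rightarrow> real poly"
  assumes fam: "\<forall>i\<le>j. degree (p i) = i \<and> lead_coeff (p i) = 1"
    and orth: "\<forall>i\<le>j. riesz t (g * p i) = 0"
    and q: "degree q \<le> j"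
  shows "riesz t (g * q) = 0"
  using fam orth q
proof (induction j arbitrary: q)
  case 0
  have "p 0 = [:1:]" using 0(1) by (metis degree_0_id le_refl)
  moreover have "q = [:coeff q 0:]" using 0(3) by (metis degree_0_id le_zero_eq)
  ultimately have "g * q = smult (coeff q 0) (g * p 0)" by (metis mult.right_neutral mult_smult_right smult_pCons smult_0_right mult.commute pCons_one)
  then show ?case using 0(2) by (simp add: riesz_smult)
next
  case (Suc j)
  define r where "r = q - smult (coeff q (Suc j)) (p (Suc j))"
  have "degree r \<le> Suc j" unfolding r_def
    using Suc.prems by (intro degree_diff_le) (auto intro: order_trans[OF degree_smult_le])
  moreover have "lead_coeff (p (Suc j)) = 1" "degree (p (Suc j)) = Suc j" using Suc.prems(1) by blast+
  then have "coeff r (Suc j) = 0" by (simp add: r_def)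
  ultimately have "degree r \<le> j" by (rule low_deg)
  moreover have "\<forall>i\<le>j. degree (p i) = i \<and> lead_coeff (p i) = 1" "\<forall>i\<le>j. riesz t (g * p i) = 0"
    using Suc.prems(1,2) le_SucI by blast+
  ultimately have "riesz t (g * r) = 0" using Suc.IH by blast
  moreover have "g * q = g * r + smult (coeff q (Suc j)) (g * p (Suc j))"
    by (simp add: r_def algebra_simps)
  ultimately show ?case using Suc.prems(2) by (simp add: riesz_add riesz_smult)
qed

lemma orth_family:
  fixes t :: "nat \<Rightarrow> real"
  assumes sp: "\<And>P. degree P < 2*k \<Longrightarrow> P \<noteq> 0 \<Longrightarrow> (\<forall>x\<in>{a..b}. poly P x \<ge> 0) \<Longrightarrow> riesz t P > 0"
    and jk: "j \<le> k"
  shows "\<exists>p. (\<forall>i\<le>j. degree (p i) = i \<and> lead_coeff (p i) = (1::real)) \<and>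
             (\<forall>i\<le>j. \<forall>q. degree q < i \<longrightarrow> riesz t (p i * q) = 0)"
  using jk
proof (induction j)
  case 0
  show ?case by (rule exI[of _ "\<lambda>_. 1"]) auto
next
  case (Suc j)
  then obtain p where fam: "\<forall>i\<le>j. degree (p i) = i \<and> lead_coeff (p i) = (1::real)"
    and orth: "\<forall>i\<le>j. \<forall>q. degree q < i \<longrightarrow> riesz t (p i * q) = 0" by auto
  have pos: "riesz t (p i * p i) > 0" if "i \<le> j" for i
  proof (rule sp)
    have "p i \<noteq> 0" using fam that by auto
    then show "degree (p i * p i) < 2 * k" using fam that Suc.prems by (simp add: degree_mult_eq)
    show "p i * p i \<noteq> 0" using \<open>p i \<noteq> 0\<close> by simp
    show "\<forall>x\<in>{a..b}. 0 \<le> poly (p i * p i) x" by simp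
  qed
  have pair: "riesz t (p i * p l) = 0" if "i \<le> j" "l \<le> j" "i \<noteq> l" for i l
  proof (cases "l < i")
    case True then show ?thesis using orth fam that by auto
  next
    case False
    then have "i < l" using that by simp
    then have "riesz t (p l * p i) = 0" using orth fam that by auto
    then show ?thesis by (simp add: mult.commute)
  qed
  define c where "c i = riesz t (monom 1 (Suc j) * p i) / riesz t (p i * p i)" for i
  define S where "S = (\<Sum>i\<le>j. smult (c i) (p i))"
  define new where "new = monom 1 (Suc j) - S"
  have dS: "degree S \<le> j" unfolding S_def
    by (rule degree_sum_le) (use fam in \<open>auto intro: order_trans[OF degree_smult_le]\<close>)
  have dnew: "degree new = Suc j"
  proof -
    have "degree (monom (1::real) (Suc j) + - S) = Suc j"
      by (subst degree_add_eq_left) (use dS in \<open>auto simp: degree_monom_eq\<close>)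
    then show ?thesis by (simp add: new_def)
  qed
  have lnew: "lead_coeff new = 1"
    using dnew dS by (simp add: new_def coeff_eq_0)
  have onew: "riesz t (new * p l) = 0" if "l \<le> j" for l
  proof -
    have "S * p l = (\<Sum>i\<le>j. smult (c i) (p i * p l))"
      by (simp add: S_def sum_distrib_right)
    then have "new * p l = monom 1 (Suc j) * p l - (\<Sum>i\<le>j. smult (c i) (p i * p l))"
      by (simp add: new_def left_diff_distrib)
    then have "riesz t (new * p l) = riesz t (monom 1 (Suc j) * p l) - (\<Sum>i\<le>j. c i * riesz t (p i * p l))"
      by (simp add: riesz_diff riesz_sum riesz_smult)
    also have "(\<Sum>i\<le>j. c i * riesz t (p i * p l)) = (\<Sum>i\<le>j. if i = l then c l * riesz t (p l * p l) else 0)"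
      by (rule sum.cong) (use pair that in auto)
    also have "\<dots> = c l * riesz t (p l * p l)" using that by (simp add: sum.delta)
    also have "\<dots> = riesz t (monom 1 (Suc j) * p l)" using pos[OF that] by (simp add: c_def)
    finally show ?thesis by simp
  qed
  have onew2: "riesz t (new * q) = 0" if "degree q < Suc j" for q
    by (rule orth_ext[of j p t new q]) (use fam onew that in auto)
  show ?case
    by (rule exI[of _ "p(Suc j := new)"]) (use fam orth dnew lnew onew2 in \<open>auto simp: le_Suc_eq\<close>)
qed

lemma order_omega:
  assumes "finite R"
  shows "order z (omega R) = (if z \<in> R then 1 else 0)"
proof (cases "z \<in> R")
  case True
  have "omega R = [:-z,1:] * omega (R - {z})"
    using True assms omega_insert[of "R - {z}" z] by (simp add: insert_absorb)
  moreover have "order z (omega (R - {z})) = 0"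
    by (rule order_0I) (use assms poly_omega_nz in auto)
  moreover have "order z [:-z,1:] = 1" using order_power_n_n[of z 1] by simp
  moreover have "[:-z,1:] * omega (R - {z}) \<noteq> 0"
  proof -
    have "[:-z,1:] \<noteq> (0::real poly)" by simp
    then show ?thesis using omega_nz[of "R - {z}"] by (metis mult_eq_0_iff)
  qed
  ultimately show ?thesis using True order_mult[of "[:-z,1:]" "omega (R - {z})" z] by simp
next
  case False
  then show ?thesis by (auto intro!: order_0I simp: poly_omega_nz assms)
qed

lemma gauss:
  fixes t :: "nat \<Rightarrow> real"
  assumes sp: "\<And>P. degree P < 2*k \<Longrightarrow> P \<noteq> 0 \<Longrightarrow> (\<forall>x\<in>{a..b}. poly P x \<ge> 0) \<Longrightarrow> riesz t P > 0"
  shows "\<exists>Z. Z \<subseteq> {a<..<b} \<and> finite Z \<and> card Z = k \<and>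
           (\<forall>f. degree f < 2*k \<longrightarrow> (\<forall>z\<in>Z. poly f z = 0) \<longrightarrow> riesz t f = 0)"
proof -
  obtain p where fam: "\<forall>i\<le>k. degree (p i) = i \<and> lead_coeff (p i) = (1::real)"
    and orth: "\<forall>i\<le>k. \<forall>q. degree q < i \<longrightarrow> riesz t (p i * q) = 0"
    using orth_family[OF sp, of k] by blast
  define P where "P = p k"
  have dP: "degree P = k" and lP: "lead_coeff P = 1" using fam by (auto simp: P_def)
  have Pnz: "P \<noteq> 0" using lP by auto
  have oP: "riesz t (P * q) = 0" if "degree q < k" for q using orth that by (auto simp: P_def)
  define R where "R = {z. a < z \<and> z < b \<and> odd (order z P)}"
  have Rroots: "R \<subseteq> {x. poly P x = 0}"
    unfolding R_def using order_root Pnz by fastforce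
  have finR: "finite R" using Rroots poly_roots_finite[OF Pnz] finite_subset by blast
  have cardR: "card R \<le> k"
    using card_mono[OF poly_roots_finite[OF Pnz] Rroots] card_poly_roots_bound[OF Pnz] dP by simp
  have "\<not> card R < k"
  proof
    assume lt: "card R < k"
    define F where "F = P * omega R"
    have Fnz: "F \<noteq> 0" using Pnz omega_nz by (simp add: F_def)
    have dF: "degree F < 2 * k" using lt dP finR Pnz omega_nz
      by (simp add: F_def degree_mult_eq degree_omega)
    have ev: "\<forall>z. a < z \<and> z < b \<longrightarrow> even (order z F)"
    proof (intro allI impI)
      fix z assume z: "a < z \<and> z < b"
      have "order z F = order z P + (if z \<in> R then 1 else 0)"
        using order_mult[OF Fnz[unfolded F_def]] order_omega[OF finR] by (simp add: F_def)
      then show "even (order z F)" using z by (auto simp: R_def)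
    qed
    have F0: "riesz t F = 0" unfolding F_def
      by (rule oP) (use lt finR in \<open>simp add: degree_omega\<close>)
    from sign_const[OF Fnz ev] show False
    proof
      assume "\<forall>x\<in>{a..b}. 0 \<le> poly F x"
      then have "riesz t F > 0" using sp[OF dF Fnz] by blast
      then show False using F0 by simp
    next
      assume "\<forall>x\<in>{a..b}. poly F x \<le> 0"
      then have "riesz t (-F) > 0" using sp[of "-F"] dF Fnz by auto
      then show False using F0 by (simp add: riesz_minus)
    qed
  qed
  then have cR: "card R = k" using cardR by simp
  have "omega R dvd P" by (rule omega_dvd[OF finR]) (use Rroots in auto)
  then obtain h where h: "P = omega R * h" by (metis dvdE)
  have hnz: "h \<noteq> 0" using h Pnz by auto
  have "degree h = 0" using h dP cR finR hnz omega_nz by (simp add: degree_mult_eq degree_omega)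
  moreover have "lead_coeff h = 1" using h lP by (simp add: lead_coeff_mult lead_omega)
  ultimately have "h = 1" by (metis degree_0_id pCons_one)
  then have PR: "P = omega R" using h by simp
  have van: "riesz t f = 0" if A: "degree f < 2*k" "\<forall>z\<in>R. poly f z = 0" for f
  proof (cases "f = 0")
    case True then show ?thesis by simp
  next
    case False
    obtain q where q: "f = omega R * q" using omega_dvd[OF finR A(2)] by (metis dvdE)
    have "q \<noteq> 0" using False q by auto
    then have "degree q < k" using A(1) q cR finR omega_nz by (simp add: degree_mult_eq degree_omega)
    then show ?thesis using oP PR q by simp
  qed
  show ?thesis
    by (rule exI[of _ R]) (use finR cR van in \<open>auto simp: R_def\<close>)
qed

definition SP :: "nat \<Rightarrow> (nat \<Rightarrow> real) \<Rightarrow> real \<Rightarrow> real \<Rightarrow> bool" where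
  "SP n s a b \<longleftrightarrow> (\<forall>P. degree P \<le> n \<longrightarrow> P \<noteq> 0 \<longrightarrow> (\<forall>x\<in>{a..b}. poly P x \<ge> 0) \<longrightarrow> riesz s P > 0)"

definition quad :: "nat \<Rightarrow> (nat \<Rightarrow> real) \<Rightarrow> real set \<Rightarrow> (real \<Rightarrow> real) \<Rightarrow> bool" where
  "quad n s Y w \<longleftrightarrow> finite Y \<and> (\<forall>y\<in>Y. w y > 0) \<and>
     (\<forall>f. degree f \<le> n \<longrightarrow> riesz s f = (\<Sum>y\<in>Y. w y * poly f y))"

lemma SP_mono: "SP n s a b \<Longrightarrow> a' \<le> a \<Longrightarrow> b \<le> b' \<Longrightarrow> SP n s a' b'"
  unfolding SP_def by auto

lemma quad_from_van:
  assumes fin: "finite Y" "card Y \<le> n + 1"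
    and van: "\<And>f. degree f \<le> n \<Longrightarrow> \<forall>y\<in>Y. poly f y = 0 \<Longrightarrow> riesz s f = 0"
    and sp: "SP n s a b"
    and test: "\<And>y. y \<in> Y \<Longrightarrow> \<exists>F. degree F \<le> n \<and> (\<forall>x\<in>{a..b}. poly F x \<ge> 0) \<and>
                   (\<forall>y'\<in>Y-{y}. poly F y' = 0) \<and> poly F y > 0"
  shows "quad n s Y (\<lambda>y. riesz s (lag Y y))"
proof -
  have rep: "riesz s f = (\<Sum>y\<in>Y. riesz s (lag Y y) * poly f y)" if "degree f \<le> n" for f
    using interp_repr[OF fin van that] by blast
  have "riesz s (lag Y y) > 0" if y: "y \<in> Y" for y
  proof -
    obtain F where F: "degree F \<le> n" "\<forall>x\<in>{a..b}. poly F x \<ge> 0" "\<forall>y'\<in>Y-{y}. poly F y' = 0" "poly F y > 0"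
      using test[OF y] by blast
    have "F \<noteq> 0" using F(4) by auto
    then have pos: "riesz s F > 0" using sp F unfolding SP_def by blast
    have "riesz s F = (\<Sum>y'\<in>Y. riesz s (lag Y y') * poly F y')" by (rule rep[OF F(1)])
    also have "\<dots> = (\<Sum>y'\<in>Y. if y' = y then riesz s (lag Y y) * poly F y else 0)"
      by (rule sum.cong) (use F(3) in auto)
    also have "\<dots> = riesz s (lag Y y) * poly F y" using y fin by (simp add: sum.delta')
    finally show ?thesis using pos F(4) by (metis zero_less_mult_pos2)
  qed
  then show ?thesis unfolding quad_def using fin rep by auto
qed

lemma square_test:
  fixes Y :: "real set"
  assumes "finite Y" "y \<in> Y" "2 * (card Y - 1) \<le> n"
  shows "\<exists>F. degree F \<le> n \<and> (\<forall>x\<in>{a..b}. poly F x \<ge> 0) \<and>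
                   (\<forall>y'\<in>Y-{y}. poly F y' = 0) \<and> poly F y > 0"
proof (intro exI conjI)
  let ?F = "(omega (Y - {y}))^2"
  show "degree ?F \<le> n" using assms omega_nz
    by (simp add: degree_power_eq degree_omega card_Diff_singleton_if)
  show "\<forall>x\<in>{a..b}. poly ?F x \<ge> 0" by simp
  show "\<forall>y'\<in>Y-{y}. poly ?F y' = 0" using assms by (auto simp: poly_omega prod_zero_iff)
  show "poly ?F y > 0" using poly_omega_nz[of "Y - {y}" y] assms by simp
qed

lemma SP_shift:
  assumes sp: "SP n s a b" and r: "\<forall>x\<in>{a..b}. poly r x \<ge> 0" "r \<noteq> 0"
    and d: "degree r + k \<le> n + 1"
  shows "\<And>P. degree P < k \<Longrightarrow> P \<noteq> 0 \<Longrightarrow> (\<forall>x\<in>{a..b}. poly P x \<ge> 0) \<Longrightarrow>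
            riesz (\<lambda>j. riesz s (r * monom 1 j)) P > 0"
proof -
  fix P :: "real poly" assume P: "degree P < k" "P \<noteq> 0" "\<forall>x\<in>{a..b}. poly P x \<ge> 0"
  have "degree (r * P) \<le> n" using P d r by (simp add: degree_mult_eq)
  moreover have "r * P \<noteq> 0" using P r by simp
  moreover have "\<forall>x\<in>{a..b}. poly (r * P) x \<ge> 0" using P r by simp
  ultimately have "riesz s (r * P) > 0" using sp unfolding SP_def by blast
  then show "riesz (\<lambda>j. riesz s (r * monom 1 j)) P > 0" by (simp add: riesz_shift)
qed

lemma quad_even:
  assumes sp: "SP (2*m) s a b" and c: "c \<le> a"
  shows "\<exists>Y w. quad (2*m) s Y w \<and> card Y = m + 1 \<and> c \<in> Y \<and> Y \<subseteq> insert c {a<..<b}"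
proof -
  define r where "r = [:-c, 1:]"
  define t where "t = (\<lambda>j. riesz s (r * monom 1 j))"
  have spt: "\<And>P. degree P < 2*m \<Longrightarrow> P \<noteq> 0 \<Longrightarrow> (\<forall>x\<in>{a..b}. poly P x \<ge> 0) \<Longrightarrow> riesz t P > 0"
    unfolding t_def by (rule SP_shift[OF sp]) (use c in \<open>auto simp: r_def\<close>)
  obtain Z where Z: "Z \<subseteq> {a<..<b}" "finite Z" "card Z = m"
    "\<And>f. degree f < 2*m \<Longrightarrow> (\<forall>z\<in>Z. poly f z = 0) \<Longrightarrow> riesz t f = 0"
    using gauss[OF spt] by blast
  define Y where "Y = insert c Z"
  have cZ: "c \<notin> Z" using Z(1) c by auto
  have finY: "finite Y" and cY: "card Y = m + 1" using Z cZ by (auto simp: Y_def)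
  have van: "riesz s f = 0" if f: "degree f \<le> 2*m" "\<forall>y\<in>Y. poly f y = 0" for f
  proof (cases "f = 0")
    case True then show ?thesis by simp
  next
    case False
    have "poly f c = 0" using f by (simp add: Y_def)
    then obtain g where g: "f = r * g" unfolding r_def using poly_eq_0_iff_dvd by (metis dvdE)
    have "g \<noteq> 0" using g False by auto
    have rnz: "r \<noteq> 0" and dr: "degree r = 1" by (simp_all add: r_def)
    have "degree f = 1 + degree g" using g rnz dr \<open>g \<noteq> 0\<close> by (simp add: degree_mult_eq)
    then have "degree g < 2*m" using f by simp
    moreover have "\<forall>z\<in>Z. poly g z = 0" using f g cZ by (auto simp: Y_def r_def)
    ultimately have "riesz t g = 0" by (rule Z(4))
    then show ?thesis by (simp add: t_def riesz_shift g)
  qed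
  have "quad (2*m) s Y (\<lambda>y. riesz s (lag Y y))"
    by (rule quad_from_van[OF finY _ van sp]) (use cY finY in \<open>auto intro!: square_test\<close>)
  then show ?thesis using cY Z(1) by (auto simp: Y_def)
qed

lemma quad_odd:
  assumes sp: "SP n s a b" and n: "n + 1 = 2*m"
  shows "\<exists>Y w. quad n s Y w \<and> card Y = m \<and> Y \<subseteq> {a<..<b}"
proof -
  have spt: "\<And>P. degree P < 2*m \<Longrightarrow> P \<noteq> 0 \<Longrightarrow> (\<forall>x\<in>{a..b}. poly P x \<ge> 0) \<Longrightarrow> riesz s P > 0"
    using sp n unfolding SP_def by auto
  obtain Z where Z: "Z \<subseteq> {a<..<b}" "finite Z" "card Z = m"
    "\<And>f. degree f < 2*m \<Longrightarrow> (\<forall>z\<in>Z. poly f z = 0) \<Longrightarrow> riesz s f = 0"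
    using gauss[OF spt] by blast
  have "quad n s Z (\<lambda>y. riesz s (lag Z y))"
    by (rule quad_from_van[OF Z(2) _ _ sp]) (use Z n in \<open>auto intro!: square_test\<close>)
  then show ?thesis using Z by auto
qed

lemma quad_lobatto:
  assumes sp: "SP n s a b" and n: "n + 1 = 2*m" and ab: "a < b"
  shows "\<exists>Y w. quad n s Y w \<and> b \<in> Y \<and> Y \<subseteq> {a..b}"
proof -
  have m1: "m \<ge> 1" using n by simp
  define r where "r = [:-a, 1:] * [:b, -1:]"
  have pr: "poly r x = (x - a) * (b - x)" for x by (simp add: r_def algebra_simps)
  have rr: "[:b, -1:] = - [:-b,1:]" by simp
  have rnz: "r \<noteq> 0" using pr[of "(a+b)/2"] ab by auto
  have dr: "degree r = 2" by (simp add: r_def)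
  define t where "t = (\<lambda>j. riesz s (r * monom 1 j))"
  have r0: "\<forall>x\<in>{a..b}. poly r x \<ge> 0" by (simp add: pr)
  have dr2: "degree r + 2*(m-1) \<le> n + 1" using dr n m1 by simp
  have spt: "\<And>P. degree P < 2*(m-1) \<Longrightarrow> P \<noteq> 0 \<Longrightarrow> (\<forall>x\<in>{a..b}. poly P x \<ge> 0) \<Longrightarrow> riesz t P > 0"
    unfolding t_def by (rule SP_shift[OF sp r0 rnz dr2])
  obtain Z where Zall: "Z \<subseteq> {a<..<b} \<and> finite Z \<and> card Z = m - 1 \<and>
    (\<forall>f. degree f < 2*(m-1) \<longrightarrow> (\<forall>z\<in>Z. poly f z = 0) \<longrightarrow> riesz t f = 0)"
  proof -
    have "\<exists>Z. Z \<subseteq> {a<..<b} \<and> finite Z \<and> card Z = m - 1 \<and>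
    (\<forall>f. degree f < 2*(m-1) \<longrightarrow> (\<forall>z\<in>Z. poly f z = 0) \<longrightarrow> riesz t f = 0)"
      by (rule gauss[of "m-1" a b t]) (rule spt; assumption)
    then show ?thesis using that by blast
  qed
  then have Z: "Z \<subseteq> {a<..<b}" "finite Z" "card Z = m - 1"
    "\<And>f. degree f < 2*(m-1) \<Longrightarrow> (\<forall>z\<in>Z. poly f z = 0) \<Longrightarrow> riesz t f = 0"
    by simp_all
  define Y where "Y = insert a (insert b Z)"
  have aZ: "a \<notin> Z" and bZ: "b \<notin> Z" using Z(1) by auto
  have finY: "finite Y" and cY: "card Y = m + 1" using Z aZ bZ ab m1 by (auto simp: Y_def)
  have van: "riesz s f = 0" if f: "degree f \<le> n" "\<forall>y\<in>Y. poly f y = 0" for f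
  proof (cases "f = 0")
    case True then show ?thesis by simp
  next
    case False
    have "poly f a = 0" using f by (simp add: Y_def)
    then obtain f1 where f1: "f = [:-a,1:] * f1" using poly_eq_0_iff_dvd by (metis dvdE)
    have "poly f b = 0" using f by (simp add: Y_def)
    then have "poly f1 b = 0" using f1 ab by simp
    then obtain g where g: "f1 = [:-b,1:] * g" using poly_eq_0_iff_dvd by (metis dvdE)
    have fg: "f = r * (-g)" unfolding f1 g r_def rr by (simp only: mult.assoc minus_mult_minus)
    have "g \<noteq> 0" using fg False by auto
    then have "degree (-g) < 2*(m-1)" using fg f False rnz dr n by (simp add: degree_mult_eq)
    moreover have "\<forall>z\<in>Z. poly (-g) z = 0"
    proof
      fix z assume z: "z \<in> Z"
      then have "poly f z = 0" using f by (simp add: Y_def)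
      moreover have "poly r z \<noteq> 0" using z Z(1) pr by auto
      ultimately show "poly (-g) z = 0" using fg by simp
    qed
    ultimately have "riesz t (-g) = 0" by (rule Z(4))
    then show ?thesis by (simp add: t_def riesz_shift fg)
  qed
  have test: "\<exists>F. degree F \<le> n \<and> (\<forall>x\<in>{a..b}. poly F x \<ge> 0) \<and>
                   (\<forall>y'\<in>Y-{y}. poly F y' = 0) \<and> poly F y > 0" if y: "y \<in> Y" for y
  proof -
    have Yd: "Y - {y} = (if y = a then insert b Z else if y = b then insert a Z
                          else insert a (insert b (Z - {y})))"
      using y aZ bZ ab by (auto simp: Y_def)
    consider "y = a" | "y = b" | "y \<in> Z" "y \<noteq> a" "y \<noteq> b" using y by (auto simp: Y_def)
    then show ?thesis
    proof cases
      case 1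
      let ?F = "[:b, -1:] * (omega Z)^2"
      show ?thesis
      proof (intro exI[of _ ?F] conjI)
        have d1: "degree [:b, -1::real:] = 1" by simp
        have d2: "degree ((omega Z)^2) = 2 * (m - 1)" using Z omega_nz
          by (simp add: degree_power_eq degree_omega)
        show "degree ?F \<le> n" using degree_mult_le[of "[:b,-1:]" "(omega Z)^2"] d1 d2 n m1
          by linarith
        show "\<forall>x\<in>{a..b}. poly ?F x \<ge> 0" by (simp add: mult_right_mono)
        show "\<forall>y'\<in>Y-{y}. poly ?F y' = 0" using 1 Yd Z by (auto simp: poly_omega prod_zero_iff)
        show "poly ?F y > 0" using 1 ab poly_omega_nz[OF Z(2) aZ] by simp
      qed
    next
      case 2
      let ?F = "[:-a, 1:] * (omega Z)^2"
      show ?thesis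
      proof (intro exI[of _ ?F] conjI)
        have d1: "degree [:-a, 1::real:] = 1" by simp
        have d2: "degree ((omega Z)^2) = 2 * (m - 1)" using Z omega_nz
          by (simp add: degree_power_eq degree_omega)
        show "degree ?F \<le> n" using degree_mult_le[of "[:-a,1:]" "(omega Z)^2"] d1 d2 n m1
          by linarith
        show "\<forall>x\<in>{a..b}. poly ?F x \<ge> 0" by (simp add: mult_right_mono)
        show "\<forall>y'\<in>Y-{y}. poly ?F y' = 0" using 2 Yd Z ab by (auto simp: poly_omega prod_zero_iff)
        show "poly ?F y > 0" using 2 ab poly_omega_nz[OF Z(2) bZ] by simp
      qed
    next
      case 3
      let ?F = "r * (omega (Z - {y}))^2"
      have "card Z \<ge> 1" using 3 Z(2) by (metis card_0_eq empty_iff less_one not_le)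
      show ?thesis
      proof (intro exI[of _ ?F] conjI)
        have d2: "degree ((omega (Z - {y}))^2) = 2 * (m - 2)" using Z omega_nz 3
          by (simp add: degree_power_eq degree_omega card_Diff_singleton_if)
        show "degree ?F \<le> n" using degree_mult_le[of r "(omega (Z - {y}))^2"] dr d2 n m1 \<open>card Z \<ge> 1\<close> Z(3)
          by linarith
        show "\<forall>x\<in>{a..b}. poly ?F x \<ge> 0" using pr by simp
        show "\<forall>y'\<in>Y-{y}. poly ?F y' = 0" using 3 Yd Z ab pr by (auto simp: poly_omega prod_zero_iff)
        have "poly r y > 0" using 3 Z(1) pr by auto
        then show "poly ?F y > 0" using poly_omega_nz[of "Z - {y}" y] Z(2) by simp
      qed
    qed
  qed
  have "quad n s Y (\<lambda>y. riesz s (lag Y y))"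
    by (rule quad_from_van[OF finY _ van sp test]) (use cY n in auto)
  moreover have "Y \<subseteq> {a..b}" using Z(1) ab by (auto simp: Y_def)
  moreover have "b \<in> Y" by (simp add: Y_def)
  ultimately show ?thesis by blast
qed

lemma space_reps: "sets \<mu> = sets borel \<Longrightarrow> space \<mu> = (UNIV :: real set)"
  using sets_eq_imp_space_eq by fastforce

lemma msupp_null:
  fixes \<mu> :: "real measure"
  assumes S: "sets \<mu> = sets borel"
  shows "- msupp \<mu> \<in> null_sets \<mu>"
proof -
  define F where "F = {ball x e | x e. e > 0 \<and> emeasure \<mu> (ball x e) = 0}"
  have UF: "\<Union>F = - msupp \<mu>"
  proof
    show "\<Union>F \<subseteq> - msupp \<mu>"
    proof
      fix y assume "y \<in> \<Union>F"
      then obtain x e where xe: "e > 0" "emeasure \<mu> (ball x e) = 0" "y \<in> ball x e"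
        by (auto simp: F_def)
      define e' where "e' = e - dist x y"
      have e': "e' > 0" using xe by (simp add: e'_def)
      have "ball y e' \<subseteq> ball x e"
      proof
        fix z assume "z \<in> ball y e'"
        then have "dist y z < e'" by simp
        moreover have "dist x z \<le> dist x y + dist y z" by (rule dist_triangle)
        ultimately show "z \<in> ball x e" by (simp add: e'_def)
      qed
      then have "emeasure \<mu> (ball y e') \<le> emeasure \<mu> (ball x e)"
        by (intro emeasure_mono) (auto simp: S)
      then have "emeasure \<mu> (ball y e') = 0" using xe by simp
      then show "y \<in> - msupp \<mu>" using e' by (auto simp: msupp_def)
    qed
  next
    show "- msupp \<mu> \<subseteq> \<Union>F"
    proof
      fix x assume "x \<in> - msupp \<mu>"
      then obtain e where "e > 0" "\<not> emeasure \<mu> (ball x e) > 0" by (auto simp: msupp_def)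
      then have "ball x e \<in> F" "x \<in> ball x e" by (auto simp: F_def)
      then show "x \<in> \<Union>F" by blast
    qed
  qed
  have "\<And>S. S \<in> F \<Longrightarrow> open S" by (auto simp: F_def)
  then obtain F' where F': "F' \<subseteq> F" "countable F'" "\<Union>F' = \<Union>F" using Lindelof by metis
  have "(\<Union>i\<in>F'. i) \<in> null_sets \<mu>"
  proof (rule null_sets_UN'[OF F'(2)])
    fix i assume "i \<in> F'"
    then have "i \<in> F" using F' by auto
    then show "i \<in> null_sets \<mu>" by (auto simp: F_def S null_sets_def)
  qed
  then show ?thesis using F'(3) UF by simp
qed

lemma AE_msupp:
  fixes \<mu> :: "real measure"
  assumes S: "sets \<mu> = sets borel"
  shows "AE x in \<mu>. x \<in> msupp \<mu>"
  by (rule AE_I'[OF msupp_null[OF S]]) auto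

lemma reps_finite:
  assumes "\<mu> \<in> reps_pos n s"
  shows "finite_measure \<mu>"
proof -
  have S: "sets \<mu> = sets borel" using assms by (simp add: reps_pos_def)
  have "integrable \<mu> (\<lambda>t::real. t ^ 0)" using assms unfolding reps_pos_def by blast
  moreover have "(indicator (space \<mu>) :: real \<Rightarrow> real) = (\<lambda>t::real. t ^ 0)"
    by (simp add: space_reps[OF S])
  ultimately have "integrable \<mu> (indicator (space \<mu>) :: real \<Rightarrow> real)" by simp
  then have "emeasure \<mu> (space \<mu>) < \<infinity>" by (simp add: integrable_indicator_iff)
  then show ?thesis by (intro finite_measureI) simp
qed

lemma reps_poly:
  assumes "\<mu> \<in> reps_pos n s" "degree P \<le> n"
  shows "integrable \<mu> (poly P) \<and> riesz s P = (\<integral>x. poly P x \<partial>\<mu>)"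
proof -
  have mom: "integrable \<mu> (\<lambda>t. t ^ k) \<and> (\<integral>t. t ^ k \<partial>\<mu>) = s k" if "k \<le> n" for k
    using assms(1) that by (simp add: reps_pos_def)
  have pe: "poly P = (\<lambda>x. \<Sum>k\<le>degree P. coeff P k * x ^ k)" by (rule ext) (simp add: poly_altdef)
  have int: "integrable \<mu> (\<lambda>x. \<Sum>k\<le>degree P. coeff P k * x ^ k)"
  proof (rule Bochner_Integration.integrable_sum)
    fix k assume "k \<in> {..degree P}"
    then have "k \<le> n" using assms(2) by simp
    then have "integrable \<mu> (\<lambda>t. t ^ k)" using mom by blast
    then show "integrable \<mu> (\<lambda>x. coeff P k * x ^ k)" by (rule integrable_mult_right)
  qed
  have "(\<integral>x. (\<Sum>k\<le>degree P. coeff P k * x ^ k) \<partial>\<mu>) = (\<Sum>k\<le>degree P. coeff P k * s k)"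
  proof -
    have "(\<integral>x. (\<Sum>k\<le>degree P. coeff P k * x ^ k) \<partial>\<mu>) = (\<Sum>k\<le>degree P. (\<integral>x. coeff P k * x ^ k \<partial>\<mu>))"
    proof (rule Bochner_Integration.integral_sum)
      fix k assume "k \<in> {..degree P}"
      then have "k \<le> n" using assms(2) by simp
      then have "integrable \<mu> (\<lambda>t. t ^ k)" using mom by blast
      then show "integrable \<mu> (\<lambda>x. coeff P k * x ^ k)" by (rule integrable_mult_right)
    qed
    also have "\<dots> = (\<Sum>k\<le>degree P. coeff P k * s k)"
      by (rule sum.cong) (use mom assms(2) in auto)
    finally show ?thesis .
  qed
  then show ?thesis using int pe by (simp add: riesz_def)
qed

lemma integral_pos_supp:
  fixes \<mu> :: "real measure" and f :: "real \<Rightarrow> real"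
  assumes S: "sets \<mu> = sets borel" and fin: "finite_measure \<mu>"
    and int: "integrable \<mu> f" and cont: "continuous_on UNIV f"
    and nn: "\<forall>x\<in>msupp \<mu>. f x \<ge> 0" and x: "x \<in> msupp \<mu>" and fx: "f x > 0"
  shows "(\<integral>y. f y \<partial>\<mu>) > 0"
proof -
  have "isCont f x" using cont by (simp add: continuous_on_eq_continuous_at)
  then have "f \<midarrow>x\<rightarrow> f x" by (simp add: isCont_def)
  from LIM_D[OF this, of "f x / 2"] fx obtain d where d: "d > 0"
    "\<And>y. y \<noteq> x \<and> norm (y - x) < d \<Longrightarrow> norm (f y - f x) < f x / 2" by auto
  have ball: "f y > f x / 2" if "y \<in> ball x d" for y
  proof (cases "y = x")
    case True then show ?thesis using fx by simp
  next
    case False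
    then have "norm (f y - f x) < f x / 2" using d that by (auto simp: dist_norm norm_minus_commute)
    then show ?thesis unfolding real_norm_def abs_less_iff by linarith
  qed
  have pos: "emeasure \<mu> (ball x d) > 0" using x d by (auto simp: msupp_def)
  have B: "ball x d \<in> sets \<mu>" by (simp add: S)
  have finB: "emeasure \<mu> (ball x d) < \<infinity>" using finite_measure.emeasure_finite[OF fin] by (simp add: top.not_eq_extremum)
  have mpos: "measure \<mu> (ball x d) > 0" using pos finB by (simp add: measure_def enn2real_positive_iff)
  have "(\<integral>y. (f x / 2) * indicator (ball x d) y \<partial>\<mu>) \<le> (\<integral>y. f y \<partial>\<mu>)"
  proof (rule integral_mono_AE)
    show "integrable \<mu> (\<lambda>y. (f x / 2) * indicator (ball x d) y)"
      using B finB by (intro integrable_mult_right) (simp add: integrable_indicator_iff space_reps[OF S])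
    show "integrable \<mu> f" by (rule int)
    show "AE y in \<mu>. f x / 2 * indicator (ball x d) y \<le> f y"
      using AE_msupp[OF S]
    proof eventually_elim
      case (elim y)
      then show ?case using nn ball[of y] by (auto split: split_indicator)
    qed
  qed
  moreover have "(\<integral>y. (f x / 2) * indicator (ball x d) y \<partial>\<mu>) = f x / 2 * measure \<mu> (ball x d)"
    using B finB by simp
  moreover have "f x / 2 * measure \<mu> (ball x d) > 0" using fx mpos by simp
  ultimately show ?thesis by linarith
qed

lemma reps_pos_on:
  assumes mu: "\<mu> \<in> reps_pos n s" and sub: "msupp \<mu> \<subseteq> {a..b}"
  shows "positive_on n s a b"
  unfolding positive_on_def
proof (intro allI impI)
  fix P :: "real poly" assume P: "degree P \<le> n \<and> (\<forall>x\<in>{a..b}. 0 \<le> poly P x)"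
  have S: "sets \<mu> = sets borel" using mu by (simp add: reps_pos_def)
  have "riesz s P = (\<integral>x. poly P x \<partial>\<mu>)" using reps_poly[OF mu] P by blast
  also have "\<dots> \<ge> 0"
    by (rule integral_nonneg_AE) (use AE_msupp[OF S] sub P in \<open>auto elim!: eventually_mono\<close>)
  finally show "riesz s P \<ge> 0" .
qed

lemma reps_vanish:
  assumes mu: "\<mu> \<in> reps_pos n s" and sub: "msupp \<mu> \<subseteq> {a..b}"
    and P: "degree P \<le> n" "\<forall>x\<in>{a..b}. poly P x \<ge> 0" "riesz s P = 0"
  shows "\<forall>x\<in>msupp \<mu>. poly P x = 0"
proof (rule ccontr)
  assume "\<not> ?thesis"
  then obtain x where x: "x \<in> msupp \<mu>" "poly P x \<noteq> 0" by blast
  then have fx: "poly P x > 0" using sub P(2) by force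
  have S: "sets \<mu> = sets borel" using mu by (simp add: reps_pos_def)
  have cpoly: "continuous_on UNIV (poly P)" by (rule continuous_on_poly[OF continuous_on_id, unfolded id_def])
  have "(\<integral>y. poly P y \<partial>\<mu>) > 0"
    by (rule integral_pos_supp[of \<mu> "poly P" x, OF S reps_finite[OF mu] _ _ _ x(1) fx])
       (use reps_poly[OF mu P(1)] sub P(2) cpoly in auto)
  then show False using reps_poly[OF mu P(1)] P(3) by simp
qed

lemma roots_count:
  fixes P :: "real poly"
  assumes P: "P \<noteq> 0" "\<forall>x\<in>{a..b}. poly P x \<ge> 0"
    and S: "S \<subseteq> {a<..<b}" "\<forall>z\<in>S. poly P z = 0"
  shows "finite S \<and> 2 * card S \<le> degree P"
proof -
  have "S \<subseteq> {x. poly P x = 0}" using S by auto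
  then have finS: "finite S" using poly_roots_finite[OF P(1)] by (rule finite_subset)
  have "\<forall>z\<in>S. [:-z,1:]^2 dvd P"
  proof
    fix z assume z: "z \<in> S"
    show "[:-z,1:]^2 dvd P"
    proof (rule nonneg_root_sq)
      show "poly P z = 0" using S z by blast
      show "min (z - a) (b - z) > 0" using S z by auto
      fix x assume "\<bar>x - z\<bar> < min (z - a) (b - z)"
      then have "x \<in> {a..b}" by auto
      then show "poly P x \<ge> 0" using P by blast
    qed
  qed
  then have "(omega S)^2 dvd P" by (rule omega_sq_dvd[OF finS])
  then have "degree ((omega S)^2) \<le> degree P" using P(1) by (rule dvd_imp_degree_le)
  then show ?thesis using finS omega_nz by (simp add: degree_power_eq degree_omega)
qed

definition qmeas :: "real set \<Rightarrow> (real \<Rightarrow> real) \<Rightarrow> real measure" where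
  "qmeas Y w = distr (point_measure Y (\<lambda>y. ennreal (w y))) borel (\<lambda>x. x)"

lemma qmeas_sets[simp]: "sets (qmeas Y w) = sets borel"
  by (simp add: qmeas_def)

lemma qmeas_measurable: "(\<lambda>x. x) \<in> measurable (point_measure Y f) borel"
  by simp

lemma qmeas_emeasure:
  assumes "finite Y" "A \<in> sets borel"
  shows "emeasure (qmeas Y w) A = (\<Sum>y\<in>A \<inter> Y. ennreal (w y))"
proof -
  have "emeasure (qmeas Y w) A = emeasure (point_measure Y (\<lambda>y. ennreal (w y))) (A \<inter> Y)"
    unfolding qmeas_def using assms(2) by (subst emeasure_distr) (auto simp: space_point_measure)
  also have "\<dots> = (\<Sum>y\<in>A \<inter> Y. ennreal (w y))"
    using assms(1) by (intro emeasure_point_measure_finite) auto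
  finally show ?thesis .
qed

lemma qmeas_point:
  assumes "finite Y"
  shows "emeasure (qmeas Y w) {p} = (if p \<in> Y then ennreal (w p) else 0)"
  using qmeas_emeasure[OF assms, of "{p}" w] by auto

lemma qmeas_supp:
  assumes "finite Y" "\<forall>y\<in>Y. w y > 0"
  shows "msupp (qmeas Y w) = Y"
proof
  show "Y \<subseteq> msupp (qmeas Y w)"
  proof
    fix y assume y: "y \<in> Y"
    show "y \<in> msupp (qmeas Y w)" unfolding msupp_def
    proof (intro CollectI allI impI)
      fix e :: real assume e: "e > 0"
      have h2: "ennreal (w y) \<le> (\<Sum>z\<in>ball y e \<inter> Y. ennreal (w z))"
        by (rule member_le_sum) (use y e assms(1) in auto)
      have h1: "0 < ennreal (w y)" using assms(2) y by simp
      have "emeasure (qmeas Y w) (ball y e) = (\<Sum>z\<in>ball y e \<inter> Y. ennreal (w z))"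
        by (rule qmeas_emeasure[OF assms(1)]) simp
      then show "emeasure (qmeas Y w) (ball y e) > 0" using less_le_trans[OF h1 h2] by simp
    qed
  qed
next
  show "msupp (qmeas Y w) \<subseteq> Y"
  proof
    fix x assume x: "x \<in> msupp (qmeas Y w)"
    show "x \<in> Y"
    proof (rule ccontr)
      assume xY: "x \<notin> Y"
      obtain d where d: "d > 0" "\<forall>y\<in>Y. y \<noteq> x \<longrightarrow> d \<le> dist x y"
        using finite_set_avoid[OF assms(1)] by blast
      have "ball x d \<inter> Y = {}" using d xY by (auto simp: dist_commute)
      then have "emeasure (qmeas Y w) (ball x d) = 0"
        using qmeas_emeasure[OF assms(1), of "ball x d" w] by simp
      then show False using x d by (auto simp: msupp_def)
    qed
  qed
qed

lemma qmeas_moment: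
  assumes "finite Y" "\<forall>y\<in>Y. w y \<ge> 0"
  shows "integrable (qmeas Y w) (\<lambda>t. t ^ k) \<and> (\<integral>t. t ^ k \<partial>qmeas Y w) = (\<Sum>y\<in>Y. w y * y ^ k)"
proof -
  have m: "(\<lambda>t::real. t ^ k) \<in> borel_measurable borel" by measurable
  have "integrable (point_measure Y (\<lambda>y. ennreal (w y))) (\<lambda>t. t ^ k)"
    using integrable_point_measure_finite[OF assms(1)] by blast
  then have "integrable (qmeas Y w) (\<lambda>t. t ^ k)"
    unfolding qmeas_def by (subst integrable_distr_eq[OF qmeas_measurable m]) simp
  moreover have "(\<integral>t. t ^ k \<partial>qmeas Y w) = (\<Sum>y\<in>Y. w y * y ^ k)"
    unfolding qmeas_def
    by (subst integral_distr[OF qmeas_measurable m])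
       (use assms in \<open>simp add: lebesgue_integral_point_measure_finite\<close>)
  ultimately show ?thesis by blast
qed

lemma qmeas_reps:
  assumes q: "quad n s Y w" and sub: "Y \<subseteq> {c..d}" and c: "0 < c" "c \<le> d"
  shows "qmeas Y w \<in> reps_pos n s \<and> msupp (qmeas Y w) = Y"
proof -
  have fin: "finite Y" and wp: "\<forall>y\<in>Y. w y > 0"
    and rep: "\<And>f. degree f \<le> n \<Longrightarrow> riesz s f = (\<Sum>y\<in>Y. w y * poly f y)"
    using q by (auto simp: quad_def)
  have supp: "msupp (qmeas Y w) = Y" by (rule qmeas_supp[OF fin wp])
  have "integrable (qmeas Y w) (\<lambda>t. t ^ k) \<and> (\<integral>t. t ^ k \<partial>qmeas Y w) = s k" if "k \<le> n" for k
  proof -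
    have "riesz s (monom 1 k) = (\<Sum>y\<in>Y. w y * y ^ k)"
      using rep[of "monom 1 k"] that by (simp add: degree_monom_eq poly_monom)
    then show ?thesis using qmeas_moment[OF fin, of w k] wp riesz_monom[of s k]
      by (auto simp: less_imp_le)
  qed
  then show ?thesis unfolding reps_pos_def using supp sub c by auto
qed

lemma meas_poly:
  fixes \<mu> :: "real measure"
  assumes S: "sets \<mu> = sets borel"
  shows "poly P \<in> borel_measurable \<mu>"
proof -
  have "poly P \<in> borel_measurable borel"
    by (rule borel_measurable_continuous_onI) (rule continuous_on_poly[OF continuous_on_id, unfolded id_def])
  then show ?thesis using measurable_cong_sets[OF S refl] by blast
qed

lemma meas_point:
  assumes mu: "\<mu> \<in> reps_pos n s" and S: "finite S" "card S \<le> n + 1" "msupp \<mu> \<subseteq> S" and z: "z \<in> S"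
  shows "measure \<mu> {z} = riesz s (lag S z)"
proof -
  have Sb: "sets \<mu> = sets borel" using mu by (simp add: reps_pos_def)
  have dl: "degree (lag S z) \<le> n" using degree_lag[OF S(1) z] S(2) by simp
  have "riesz s (lag S z) = (\<integral>x. poly (lag S z) x \<partial>\<mu>)" using reps_poly[OF mu dl] by blast
  also have "\<dots> = (\<integral>x. indicator {z} x \<partial>\<mu>)"
  proof (rule integral_cong_AE)
    show "poly (lag S z) \<in> borel_measurable \<mu>" by (rule meas_poly[OF Sb])
    show "(indicator {z} :: real \<Rightarrow> real) \<in> borel_measurable \<mu>"
      by (rule borel_measurable_indicator) (simp add: Sb)
    show "AE x in \<mu>. poly (lag S z) x = indicator {z} x"
      using AE_msupp[OF Sb]
    proof eventually_elim
      case (elim x)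
      then have "x \<in> S" using S(3) by blast
      then show ?case using poly_lag[OF S(1) z] by (auto split: split_indicator)
    qed
  qed
  also have "\<dots> = measure \<mu> {z}" by (simp add: space_reps[OF Sb])
  finally show ?thesis by simp
qed

lemma unique_fin:
  assumes mu: "\<mu> \<in> reps_pos n s" and nu: "\<nu> \<in> reps_pos n s"
    and S: "finite S" "card S \<le> n + 1" "msupp \<mu> \<subseteq> S" "msupp \<nu> \<subseteq> S"
  shows "\<mu> = \<nu>"
proof -
  have Sm: "sets \<mu> = sets borel" and Sn: "sets \<nu> = sets borel" using mu nu by (auto simp: reps_pos_def)
  have eq: "emeasure M A = (\<Sum>y\<in>A \<inter> S. ennreal (riesz s (lag S y)))"
    if M: "M \<in> reps_pos n s" "msupp M \<subseteq> S" and A: "A \<in> sets borel" for M A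
  proof -
    have SM: "sets M = sets borel" using M by (simp add: reps_pos_def)
    interpret finite_measure M by (rule reps_finite[OF M(1)])
    have cS: "- S \<in> sets M" using S(1) by (simp add: SM finite_imp_closed)
    have nS: "- S \<in> null_sets M"
      by (rule null_sets_subset[OF msupp_null[OF SM] cS]) (use M in auto)
    have "emeasure M A = emeasure M (A - (- S))"
      by (rule emeasure_Diff_null_set[OF nS, symmetric]) (simp add: SM A)
    also have "A - (- S) = A \<inter> S" by auto
    also have "emeasure M (A \<inter> S) = (\<Sum>y\<in>A \<inter> S. emeasure M {y})"
      by (rule emeasure_eq_sum_singleton) (use S(1) in \<open>auto simp: SM\<close>)
    also have "\<dots> = (\<Sum>y\<in>A \<inter> S. ennreal (riesz s (lag S y)))"
    proof (rule sum.cong[OF refl])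
      fix y assume "y \<in> A \<inter> S"
      then show "emeasure M {y} = ennreal (riesz s (lag S y))"
        using meas_point[OF M(1) S(1,2) M(2)] emeasure_eq_measure by simp
    qed
    finally show ?thesis .
  qed
  show ?thesis
  proof (rule measure_eqI)
    show "sets \<mu> = sets \<nu>" using Sm Sn by simp
    fix A assume "A \<in> sets \<mu>"
    then have "A \<in> sets borel" using Sm by simp
    then show "emeasure \<mu> A = emeasure \<nu> A" using eq[OF mu S(3)] eq[OF nu S(4)] by simp
  qed
qed

lemma ind_le:
  assumes "\<mu> \<in> reps_pos n s" "finite (msupp \<mu>)"
  shows "ind_pos n s \<le> enat (card (msupp \<mu>))"
  unfolding ind_pos_def using INF_lower[OF assms(1), of "\<lambda>\<mu>. if finite (msupp \<mu>) then enat (card (msupp \<mu>)) else \<infinity>"] assms(2)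
  by simp

lemma ind_ge:
  assumes "\<And>\<mu>. \<mu> \<in> reps_pos n s \<Longrightarrow> finite (msupp \<mu>) \<Longrightarrow> m \<le> card (msupp \<mu>)"
  shows "enat m \<le> ind_pos n s"
  unfolding ind_pos_def by (rule INF_greatest) (use assms in auto)

lemma ind_attain:
  assumes "ind_pos n s = enat m"
  shows "\<exists>\<mu>\<in>reps_pos n s. finite (msupp \<mu>) \<and> card (msupp \<mu>) = m"
proof -
  define A where "A = (\<lambda>\<mu>. if finite (msupp \<mu>) then enat (card (msupp \<mu>)) else \<infinity>) ` reps_pos n s"
  have I: "Inf A = enat m" using assms by (simp add: ind_pos_def A_def)
  have "A \<noteq> {}" using I by (auto simp: Inf_enat_def)
  then have "Inf A = (LEAST x. x \<in> A)" by (simp add: Inf_enat_def)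
  moreover have "(LEAST x. x \<in> A) \<in> A" using \<open>A \<noteq> {}\<close> by (metis LeastI ex_in_conv)
  ultimately have "enat m \<in> A" using I by simp
  then show ?thesis by (auto simp: A_def split: if_splits)
qed

lemma lower_bound:
  assumes sp: "SP n s a b" and mu: "\<mu> \<in> reps_pos n s" and fin: "finite (msupp \<mu>)"
  shows "n < 2 * card (msupp \<mu>)"
proof (rule ccontr)
  assume "\<not> ?thesis"
  then have le: "2 * card (msupp \<mu>) \<le> n" by simp
  define F where "F = (omega (msupp \<mu>))^2"
  have dF: "degree F \<le> n" using le fin omega_nz by (simp add: F_def degree_power_eq degree_omega)
  have "F \<noteq> 0" using omega_nz by (simp add: F_def)
  then have pos: "riesz s F > 0" using sp dF unfolding SP_def by (simp add: F_def)
  have Sb: "sets \<mu> = sets borel" using mu by (simp add: reps_pos_def)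
  have "(\<integral>x. poly F x \<partial>\<mu>) = 0"
    by (rule integral_eq_zero_AE) (use AE_msupp[OF Sb] in \<open>auto simp: F_def poly_omega prod_zero_iff fin elim!: eventually_mono\<close>)
  then show False using reps_poly[OF mu dF] pos by simp
qed

lemma mprime: "nat \<lceil>real (n + 1) / 2\<rceil> = n div 2 + 1"
proof -
  have n: "real n = 2 * real (n div 2) + real (n mod 2)"
    by (metis of_nat_add of_nat_mult div_mult_mod_eq mult.commute of_nat_numeral)
  have "n mod 2 = 0 \<or> n mod 2 = 1" by auto
  then have r: "real (n mod 2) = 0 \<or> real (n mod 2) = 1" by auto
  have "\<lceil>real (n + 1) / 2\<rceil> = int (n div 2 + 1)"
    unfolding ceiling_eq_iff using n r by auto
  then show ?thesis by simp
qed

lemma SP_of_strict: "strictly_positive_on n s a b \<Longrightarrow> SP n s a b"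
  unfolding SP_def strictly_positive_on_def by blast

lemma not_strict_P:
  assumes ns: "\<not> strictly_positive_pos n s" and ab: "0 < a" "a < b" and po: "positive_on n s a b"
  shows "\<exists>P. degree P \<le> n \<and> (\<forall>x\<in>{a..b}. poly P x \<ge> 0) \<and> P \<noteq> 0 \<and> riesz s P = 0"
proof -
  have "\<not> strictly_positive_on n s a b" using ns ab unfolding strictly_positive_pos_def by blast
  then obtain P where P: "degree P \<le> n" "\<forall>x\<in>{a..b}. poly P x \<ge> 0" "P \<noteq> 0" "\<not> riesz s P > 0"
    using po unfolding strictly_positive_on_def by blast
  have "riesz s P \<ge> 0" using po P unfolding positive_on_def by blast
  then show ?thesis using P by (intro exI[of _ P]) auto
qed

theorem theorem4p6:
  fixes n :: nat and s :: "nat \<Rightarrow> real"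
  assumes nonneg: "\<forall>k\<le>n. s k \<ge> 0"
    and pos: "positive_pos n s"
  shows "(strictly_positive_pos n s \<longleftrightarrow> ind_pos n s = enat (nat \<lceil>real (n + 1) / 2\<rceil>))
       \<and> (ind_pos n s = enat (nat \<lceil>real (n + 1) / 2\<rceil>) \<longleftrightarrow> indeterminate_pos n s)"
proof -
  define m' where "m' = n div 2 + 1"
  have M: "nat \<lceil>real (n + 1) / 2\<rceil> = m'" unfolding m'_def by (rule mprime)
  have i_ii_iii: "ind_pos n s = enat m' \<and> indeterminate_pos n s" if i: "strictly_positive_pos n s"
  proof -
    obtain a b where ab: "0 < a" "a < b" "strictly_positive_on n s a b"
      using i unfolding strictly_positive_pos_def by blast
    have sp: "SP n s a b" using SP_of_strict[OF ab(3)] .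
    have "\<exists>\<mu>1 \<mu>2. \<mu>1 \<in> reps_pos n s \<and> \<mu>2 \<in> reps_pos n s \<and> finite (msupp \<mu>1) \<and>
                 card (msupp \<mu>1) = m' \<and> \<mu>1 \<noteq> \<mu>2"
    proof (cases "even n")
      case True
      then obtain q where q: "n = 2 * q" by (auto elim!: evenE)
      have sp': "SP (2*q) s a b" using sp q by simp
      obtain Y1 w1 where Y1: "quad (2*q) s Y1 w1" "card Y1 = q + 1" "a \<in> Y1" "Y1 \<subseteq> insert a {a<..<b}"
        using quad_even[OF sp', of a] by auto
      obtain Y2 w2 where Y2: "quad (2*q) s Y2 w2" "card Y2 = q + 1" "a/2 \<in> Y2" "Y2 \<subseteq> insert (a/2) {a<..<b}"
        using quad_even[OF sp', of "a/2"] ab by auto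
      have s1: "Y1 \<subseteq> {a..b}" using Y1(4) ab by auto
      have s2: "Y2 \<subseteq> {a/2..b}" using Y2(4) ab by auto
      have R1: "qmeas Y1 w1 \<in> reps_pos n s \<and> msupp (qmeas Y1 w1) = Y1"
        using qmeas_reps[OF Y1(1) s1] ab q by simp
      have R2: "qmeas Y2 w2 \<in> reps_pos n s \<and> msupp (qmeas Y2 w2) = Y2"
        using qmeas_reps[OF Y2(1) s2] ab q by simp
      have f1: "finite Y1" and f2: "finite Y2" and w2: "w2 (a/2) > 0"
        using Y1(1) Y2(1,3) by (auto simp: quad_def)
      have "a/2 \<notin> Y1" using s1 ab by auto
      then have "emeasure (qmeas Y1 w1) {a/2} \<noteq> emeasure (qmeas Y2 w2) {a/2}"
        using qmeas_point[OF f1, of w1 "a/2"] qmeas_point[OF f2, of w2 "a/2"] Y2(3) w2 by simp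
      then have "qmeas Y1 w1 \<noteq> qmeas Y2 w2" by metis
      moreover have "card Y1 = m'" using Y1(2) q by (simp add: m'_def)
      ultimately show ?thesis using R1 R2 f1 by metis
    next
      case False
      then have nm: "n + 1 = 2 * m'" by (simp add: m'_def)
      obtain Y1 w1 where Y1: "quad n s Y1 w1" "card Y1 = m'" "Y1 \<subseteq> {a<..<b}"
        using quad_odd[OF sp nm] by auto
      obtain Y2 w2 where Y2: "quad n s Y2 w2" "b \<in> Y2" "Y2 \<subseteq> {a..b}"
        using quad_lobatto[OF sp nm ab(2)] by auto
      have s1: "Y1 \<subseteq> {a..b}" using Y1(3) by auto
      have R1: "qmeas Y1 w1 \<in> reps_pos n s \<and> msupp (qmeas Y1 w1) = Y1"
        using qmeas_reps[OF Y1(1) s1] ab by simp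
      have R2: "qmeas Y2 w2 \<in> reps_pos n s \<and> msupp (qmeas Y2 w2) = Y2"
        using qmeas_reps[OF Y2(1) Y2(3)] ab by simp
      have f1: "finite Y1" and f2: "finite Y2" and w2: "w2 b > 0"
        using Y1(1) Y2(1,2) by (auto simp: quad_def)
      have "b \<notin> Y1" using Y1(3) by auto
      then have "emeasure (qmeas Y1 w1) {b} \<noteq> emeasure (qmeas Y2 w2) {b}"
        using qmeas_point[OF f1, of w1 b] qmeas_point[OF f2, of w2 b] Y2(2) w2 by simp
      then have "qmeas Y1 w1 \<noteq> qmeas Y2 w2" by metis
      then show ?thesis using R1 R2 f1 Y1(2) by metis
    qed
    then obtain \<mu>1 \<mu>2 where mu: "\<mu>1 \<in> reps_pos n s" "\<mu>2 \<in> reps_pos n s" "finite (msupp \<mu>1)"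
      "card (msupp \<mu>1) = m'" "\<mu>1 \<noteq> \<mu>2" by blast
    have "ind_pos n s \<le> enat m'" using ind_le[OF mu(1,3)] mu(4) by simp
    moreover have "enat m' \<le> ind_pos n s"
    proof (rule ind_ge)
      fix \<mu> assume "\<mu> \<in> reps_pos n s" "finite (msupp \<mu>)"
      then have "n < 2 * card (msupp \<mu>)" by (rule lower_bound[OF sp])
      then show "m' \<le> card (msupp \<mu>)" by (simp add: m'_def)
    qed
    ultimately have "ind_pos n s = enat m'" by simp
    moreover have "indeterminate_pos n s" using mu unfolding indeterminate_pos_def by blast
    ultimately show ?thesis by blast
  qed
  have ii_i: "strictly_positive_pos n s" if ii: "ind_pos n s = enat m'"
  proof (rule ccontr)
    assume ns: "\<not> strictly_positive_pos n s"
    obtain \<mu> where mu: "\<mu> \<in> reps_pos n s" "finite (msupp \<mu>)" "card (msupp \<mu>) = m'"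
      using ind_attain[OF ii] by blast
    obtain a b where ab: "0 < a" "a \<le> b" "msupp \<mu> \<subseteq> {a..b}"
      using mu(1) unfolding reps_pos_def by blast
    have sub: "msupp \<mu> \<subseteq> {a/2..b+1}" using ab by auto
    have po: "positive_on n s (a/2) (b+1)" by (rule reps_pos_on[OF mu(1) sub])
    obtain P where P: "degree P \<le> n" "\<forall>x\<in>{a/2..b+1}. poly P x \<ge> 0" "P \<noteq> 0" "riesz s P = 0"
      using not_strict_P[OF ns _ _ po] ab by auto
    have van: "\<forall>x\<in>msupp \<mu>. poly P x = 0" by (rule reps_vanish[OF mu(1) sub P(1,2,4)])
    have "msupp \<mu> \<subseteq> {a/2<..<b+1}" using ab by auto
    then have "2 * card (msupp \<mu>) \<le> degree P" using roots_count[OF P(3) P(2) _ van] by blast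
    then show False using mu(3) P(1) by (simp add: m'_def)
  qed
  have iii_i: "strictly_positive_pos n s" if iii: "indeterminate_pos n s"
  proof (rule ccontr)
    assume ns: "\<not> strictly_positive_pos n s"
    obtain \<mu> \<nu> where mn: "\<mu> \<in> reps_pos n s" "\<nu> \<in> reps_pos n s" "\<mu> \<noteq> \<nu>"
      using iii unfolding indeterminate_pos_def by blast
    obtain a1 b1 where ab1: "0 < a1" "a1 \<le> b1" "msupp \<mu> \<subseteq> {a1..b1}"
      using mn(1) unfolding reps_pos_def by blast
    obtain a2 b2 where ab2: "0 < a2" "a2 \<le> b2" "msupp \<nu> \<subseteq> {a2..b2}"
      using mn(2) unfolding reps_pos_def by blast
    define a where "a = min a1 a2 / 2"
    define b where "b = max b1 b2 + 1"
    have ab: "0 < a" "a < b" using ab1 ab2 by (auto simp: a_def b_def)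
    have sub1: "msupp \<mu> \<subseteq> {a..b}"
    proof
      fix x assume "x \<in> msupp \<mu>"
      then have "a1 \<le> x" "x \<le> b1" using ab1 by auto
      then show "x \<in> {a..b}" using ab1 ab2 by (auto simp: a_def b_def min_def max_def)
    qed
    have sub2: "msupp \<nu> \<subseteq> {a..b}"
    proof
      fix x assume "x \<in> msupp \<nu>"
      then have "a2 \<le> x" "x \<le> b2" using ab2 by auto
      then show "x \<in> {a..b}" using ab1 ab2 by (auto simp: a_def b_def min_def max_def)
    qed
    have po: "positive_on n s a b" by (rule reps_pos_on[OF mn(1) sub1])
    obtain P where P: "degree P \<le> n" "\<forall>x\<in>{a..b}. poly P x \<ge> 0" "P \<noteq> 0" "riesz s P = 0"
      using not_strict_P[OF ns ab po] by blast
    have van1: "\<forall>x\<in>msupp \<mu>. poly P x = 0" by (rule reps_vanish[OF mn(1) sub1 P(1,2,4)])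
    have van2: "\<forall>x\<in>msupp \<nu>. poly P x = 0" by (rule reps_vanish[OF mn(2) sub2 P(1,2,4)])
    define S where "S = {x. a < x \<and> x < b \<and> poly P x = 0}"
    have "finite S \<and> 2 * card S \<le> degree P"
      by (rule roots_count[OF P(3) P(2)]) (auto simp: S_def)
    then have fS: "finite S" and cS: "card S \<le> n + 1" using P(1) by auto
    have s1: "msupp \<mu> \<subseteq> S"
    proof
      fix x assume x: "x \<in> msupp \<mu>"
      then have "a1 \<le> x" "x \<le> b1" using ab1 by auto
      then show "x \<in> S" using ab1 ab2 van1 x by (auto simp: S_def a_def b_def min_def max_def)
    qed
    have s2: "msupp \<nu> \<subseteq> S"
    proof
      fix x assume x: "x \<in> msupp \<nu>"
      then have "a2 \<le> x" "x \<le> b2" using ab2 by auto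
      then show "x \<in> S" using ab1 ab2 van2 x by (auto simp: S_def a_def b_def min_def max_def)
    qed
    have "\<mu> = \<nu>" by (rule unique_fin[OF mn(1,2) fS cS s1 s2])
    then show False using mn(3) by simp
  qed
  show ?thesis unfolding M using i_ii_iii ii_i iii_i by blast
qed

end
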